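(* For all non-negative integers $n$ and $p$, $$\sum_{k=1}^n\frac{1}{2^{2k}}\binom{2(k+p)}{k+p}\binom{k+p}{k}\left(O_{k+p}-O_p\right)=\frac{1}{2^{2n+1}}\,\frac{p+1}{2p+1}\binom{2(n+p+1)}{n+p+1}\binom{n+p+1}{n}\left(O_{n+p+1}-O_{p+1}\right).$$ In particular, $\sum_{k=1}^n\frac{O_k}{2^{2k}}\binom{2k}{k}=\frac{n+1}{2^{2n+1}}\binom{2(n+1)}{n+1}(O_{n+1}-1)$.
   Context: The odd harmonic numbers are $O_n=\sum_{k=1}^n\frac{1}{2k-1}$, $O_0=0$. *)

theory Defs
  imports Complex_Main
begin

definition oddharm :: "nat \<Rightarrow> real" where
  "oddharm n = (\<Sum>k=1..n. 1 / (2 * real k - 1))"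

end

theory Submission
  imports Defs
begin

lemma oh_Suc: "oddharm (Suc m) = oddharm m + 1 / (2 * real m + 1)"
  unfolding oddharm_def by (simp add: algebra_simps)

lemma oh_0: "oddharm 0 = 0" unfolding oddharm_def by simp
lemma oh_1: "oddharm 1 = 1" unfolding oddharm_def by simp

lemma cb_nat: "(m+1) * ((2*(m+1)) choose (m+1)) = 2 * (2*m+1) * ((2*m) choose m)"
proof -
  have e1: "Suc m * (Suc (Suc (2*m)) choose Suc m) = Suc (Suc (2*m)) * (Suc (2*m) choose m)"
    by (rule Suc_times_binomial)
  have e2: "Suc m * (Suc (2*m) choose Suc m) = Suc (2*m) * ((2*m) choose m)"
    by (rule Suc_times_binomial)
  have e3: "Suc (2*m) choose m = Suc (2*m) choose Suc m"
    using binomial_symmetric[of m "Suc (2*m)"] by simp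
  have "Suc m * (Suc m * (Suc (Suc (2*m)) choose Suc m)) = Suc m * (2 * (Suc m * (Suc (2*m) choose Suc m)))"
    using e1 e3 by (simp del: binomial_Suc_Suc)
  also have "\<dots> = Suc m * (2 * (Suc (2*m) * ((2*m) choose m)))" using e2 by (simp del: binomial_Suc_Suc)
  finally have "Suc m * (Suc (Suc (2*m)) choose Suc m) = 2 * (Suc (2*m) * ((2*m) choose m))"
    by (metis Suc_neq_Zero mult_left_cancel)
  thus ?thesis by (simp del: binomial_Suc_Suc add: algebra_simps)
qed

lemma cb_Suc: "real ((2*(m+1)) choose (m+1)) = real ((2*m) choose m) * 2 * (2*real m+1) / (real m + 1)"
proof -
  have "real (m+1) * real ((2*(m+1)) choose (m+1)) = 2 * (2*real m+1) * real ((2*m) choose m)"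
    using arg_cong[OF cb_nat[of m], of real] by (simp del: binomial_Suc_Suc add: algebra_simps)
  thus ?thesis by (simp add: field_simps)
qed

lemma b2: "real ((m+1) choose (n+1)) = real (m choose n) * (real m + 1) / (real n + 1)"
proof -
  have "real (Suc n) * real (Suc m choose Suc n) = real (Suc m) * real (m choose n)"
    by (metis Suc_times_binomial of_nat_mult)
  thus ?thesis by (simp add: field_simps)
qed

lemma b3: assumes "n \<le> m" shows "real (m choose (n+1)) = real (m choose n) * (real m - real n) / (real n + 1)"
proof -
  have "(n+1) * (m choose (n+1)) = (m - n) * (m choose n)"
    using binomial_absorption[of n m] binomial_absorb_comp[of m n] by simp
  hence "real (n+1) * real (m choose (n+1)) = real (m - n) * real (m choose n)"
    by (metis of_nat_mult)
  thus ?thesis using assms by (simp add: field_simps of_nat_diff)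
qed

lemma gen:
  fixes b c X Y t u v K W :: real
  assumes "t \<noteq> 0" "u \<noteq> 0" "v \<noteq> 0" "K \<noteq> 0" "W \<noteq> 0" "W = u + 2*v"
  shows "1/(2*t) * (((u+1)/2)/u) * b * c * (X - Y)
     + 1/(4*t) * b * (c*((u+1)/2)/v) * (X - (Y - 1/u))
   = 1/(2*t*4) * (((u+1)/2)/u) * (b*2*W/K) * (c*K/v) * (X + 1/W - Y)"
  using assms(1-5) by (simp add: field_simps) (simp add: assms(6) algebra_simps)

lemma part1: "(\<Sum>k=1..n. 1 / 2 ^ (2*k) * real ((2*(k+p)) choose (k+p)) * real ((k+p) choose k)
        * (oddharm (k+p) - oddharm p))
     = 1 / 2 ^ (2*n+1) * (real (p+1) / real (2*p+1))
        * real ((2*(n+p+1)) choose (n+p+1)) * real ((n+p+1) choose n)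
        * (oddharm (n+p+1) - oddharm (p+1))"
proof (induction n)
  case 0
  then show ?case by simp
next
  case (Suc n)
  define m where "m = n+p+1"
  have s: "Suc n + p = m" "Suc n + p + 1 = m + 1" "n + p + 1 = m" using m_def by auto
  define t :: real where "t = 2^(2*n)"
  define u :: real where "u = 2*real p+1"
  define v :: real where "v = real n+1"
  define K :: real where "K = real m+1"
  define W :: real where "W = 2*real m+1"
  define b where "b = real ((2*m) choose m)"
  define c where "c = real (m choose n)"
  define X where "X = oddharm m"
  define Y where "Y = oddharm (p+1)"
  have p1: "real (p+1) / real (2*p+1) = ((u+1)/2)/u"
  proof -
    have "(1 + 2 * real p) \<noteq> 0" "4 * real p + 2 \<noteq> 0" by (simp_all add: add_pos_nonneg)
    thus ?thesis unfolding u_def by (simp add: field_simps)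
  qed
  have ohp: "oddharm p = Y - 1/u" using oh_Suc[of p] unfolding Y_def u_def by simp
  have ohm: "oddharm (m+1) = X + 1/W" using oh_Suc[of m] unfolding X_def W_def by simp
  have c1: "real (m choose Suc n) = c*((u+1)/2)/v"
  proof -
    have "(u+1)/2 = real p + 1" unfolding u_def by simp
    moreover have "real (m choose Suc n) = c*(real p + 1)/v"
      using b3[of n m] m_def unfolding c_def v_def by (simp del: binomial_Suc_Suc)
    ultimately show ?thesis by metis
  qed
  have c2: "real ((m+1) choose Suc n) = c*K/v"
    using b2[of m n] unfolding c_def K_def v_def by simp
  have c3: "real ((2*(m+1)) choose (m+1)) = b*2*W/K"
    using cb_Suc[of m] unfolding b_def K_def W_def by simp
  have rm: "real m = real n + real p + 1" by (simp add: m_def)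
  have WW: "W = u + 2*v" unfolding W_def u_def v_def using rm by simp
  have pw1: "(2::real) ^ (2*n+1) = 2*t" "(2::real)^(2*Suc n) = 4*t" "(2::real)^(2*Suc n+1) = 2*t*4"
    unfolding t_def by (simp_all add: power_add)
  have "(\<Sum>k=1..Suc n. 1 / 2 ^ (2*k) * real ((2*(k+p)) choose (k+p)) * real ((k+p) choose k)
        * (oddharm (k+p) - oddharm p))
      = 1 / 2 ^ (2*n+1) * (real (p+1) / real (2*p+1))
        * real ((2*m) choose m) * real (m choose n)
        * (oddharm m - oddharm (p+1))
        + 1 / 2^(2*Suc n) * real ((2*m) choose m) * real (m choose Suc n) * (oddharm m - oddharm p)"
  proof -
    have "(\<Sum>k=1..Suc n. 1 / 2 ^ (2*k) * real ((2*(k+p)) choose (k+p)) * real ((k+p) choose k)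
        * (oddharm (k+p) - oddharm p)) = (\<Sum>k=1..n. 1 / 2 ^ (2*k) * real ((2*(k+p)) choose (k+p)) * real ((k+p) choose k)
        * (oddharm (k+p) - oddharm p)) + 1 / 2 ^ (2*Suc n) * real ((2*(Suc n+p)) choose (Suc n+p)) * real ((Suc n+p) choose Suc n)
        * (oddharm (Suc n+p) - oddharm p)"
      by (rule sum.cl_ivl_Suc[THEN trans]) simp
    then show ?thesis unfolding Suc.IH s .
  qed
  also have "\<dots> = 1/(2*t) * (((u+1)/2)/u) * b * c * (X - Y)
     + 1/(4*t) * b * (c*((u+1)/2)/v) * (X - (Y - 1/u))"
    unfolding pw1 p1 c1 ohp b_def[symmetric] c_def[symmetric] X_def[symmetric] Y_def[symmetric] ..
  also have "\<dots> = 1/(2*t*4) * (((u+1)/2)/u) * (b*2*W/K) * (c*K/v) * (X + 1/W - Y)"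
    by (rule gen[OF _ _ _ _ _ WW]) (auto simp: t_def u_def v_def K_def W_def add_pos_nonneg)
  also have "\<dots> = 1 / 2 ^ (2*Suc n+1) * (real (p+1) / real (2*p+1))
        * real ((2*(m+1)) choose (m+1)) * real ((m+1) choose Suc n)
        * (oddharm (m+1) - oddharm (p+1))"
    unfolding pw1 p1 c2 c3 ohm Y_def[symmetric] ..
  finally show ?case unfolding s(2) .
qed

theorem theorem11:
  shows "(\<forall>n p :: nat.
     (\<Sum>k=1..n. 1 / 2 ^ (2*k) * real ((2*(k+p)) choose (k+p)) * real ((k+p) choose k)
        * (oddharm (k+p) - oddharm p))
     = 1 / 2 ^ (2*n+1) * (real (p+1) / real (2*p+1))
        * real ((2*(n+p+1)) choose (n+p+1)) * real ((n+p+1) choose n)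
        * (oddharm (n+p+1) - oddharm (p+1)))
   \<and> (\<forall>n :: nat.
     (\<Sum>k=1..n. oddharm k / 2 ^ (2*k) * real ((2*k) choose k))
     = real (n+1) / 2 ^ (2*n+1) * real ((2*(n+1)) choose (n+1)) * (oddharm (n+1) - 1))"
proof (intro conjI allI)
  fix n p :: nat
  show "(\<Sum>k=1..n. 1 / 2 ^ (2*k) * real ((2*(k+p)) choose (k+p)) * real ((k+p) choose k)
        * (oddharm (k+p) - oddharm p))
     = 1 / 2 ^ (2*n+1) * (real (p+1) / real (2*p+1))
        * real ((2*(n+p+1)) choose (n+p+1)) * real ((n+p+1) choose n)
        * (oddharm (n+p+1) - oddharm (p+1))" by (rule part1)
next
  fix n :: nat
  have "(\<Sum>k=1..n. oddharm k / 2 ^ (2*k) * real ((2*k) choose k))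
      = (\<Sum>k=1..n. 1 / 2 ^ (2*k) * real ((2*(k+0)) choose (k+0)) * real ((k+0) choose k)
        * (oddharm (k+0) - oddharm 0))" by (simp add: oh_0 ac_simps)
  also have "\<dots> = 1 / 2 ^ (2*n+1) * (real (0+1) / real (2*0+1))
        * real ((2*(n+0+1)) choose (n+0+1)) * real ((n+0+1) choose n)
        * (oddharm (n+0+1) - oddharm (0+1))" by (rule part1)
  also have "\<dots> = real (n+1) / 2 ^ (2*n+1) * real ((2*(n+1)) choose (n+1)) * (oddharm (n+1) - 1)"
    using oh_1 by (simp del: binomial_Suc_Suc)
  finally show "(\<Sum>k=1..n. oddharm k / 2 ^ (2*k) * real ((2*k) choose k))
     = real (n+1) / 2 ^ (2*n+1) * real ((2*(n+1)) choose (n+1)) * (oddharm (n+1) - 1)" .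
qed

end
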